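(* Let $L=\mathcal{L}\,dt$ be a Lagrangian on $J^1Q$ and let $H=p_i\,dq^i-\mathcal{H}\,dt$ be a Hamiltonian form on $V^*Q$ weakly associated with $L$. Then at every point of the Lagrangian constraint space $N_L$ the forms $H$ and $\widehat H^*H_L$ coincide: $H|_{N_L}=\widehat H^*H_L|_{N_L}$.
   Context: Let $Q\to\mathbb{R}$ be a fibre bundle over the time axis with coordinates $(t,q^i)$; $J^1Q$ is its first jet manifold with coordinates $(t,q^i,q^i_t)$; $V^*Q$ is its vertical cotangent bundle with coordinates $(t,q^i,p_i)$, $\partial^i=\partial/\partial p_i$. A Lagrangian is $L=\mathcal{L}\,dt$ with $\mathcal{L}$ a function on $J^1Q$; put $\pi_i=\partial\mathcal{L}/\partial q^i_t$. The Legendre map $\widehat L:J^1Q\to V^*Q$ over $Q$ is $p_i\circ\widehat L=\pi_i$, and $N_L=\widehat L(J^1Q)$ is the Lagrangian constraint space. The Poincaré–Cartan form is $H_L=\mathcal{L}\,dt+\pi_i(dq^i-q^i_t\,dt)$. A Hamiltonian form is a 1-form on $V^*Q$ locally $H=p_i\,dq^i-\mathcal{H}\,dt$ (the pull-back of the Liouville form $p\,dt+p_i\,dq^i$ of $T^*Q$ by a section of $T^*Q\to V^*Q$); its Hamiltonian map is $\widehat H:V^*Q\to J^1Q$, $q^i_t\circ\widehat H=\partial^i\mathcal{H}$. $H$ is weakly associated with $L$ if $\widehat L\circ\widehat H\circ\widehat L=\widehat L$ and the equality $H=H_{\widehat H}+\widehat H^*L$ holds at points of $N_L$, where $H_{\widehat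 H}=p_i\,dq^i-p_i\partial^i\mathcal{H}\,dt$; in coordinates the latter reads $\mathcal{H}(z)=p_i\partial^i\mathcal{H}(z)-\mathcal{L}(t,q^i,\partial^j\mathcal{H}(z))$ for $z\in N_L$. *)

theory Defs
  imports "HOL-Analysis.Analysis"
begin

text \<open>A point of J^1Q is (t, q, q_t), a point of V^*Q is (t, q, p),
  with q, q_t, p in real^'n (n = CARD('n) = fibre dimension of Q over the time axis).
  Tangent vectors to these (open subsets of) Euclidean spaces are elements of the same type.
  A 1-form is a map  point => tangent vector => real  (linear in the tangent vector).\<close>

type_synonym 'n pt = "real \<times> (real ^ ('n::finite)) \<times> (real ^ 'n)"
type_synonym 'n form1 = "'n pt \<Rightarrow> 'n pt \<Rightarrow> real"

definition dt :: "('n::finite) pt \<Rightarrow> real" where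
  "dt w = fst w"

definition dq :: "'n::finite \<Rightarrow> 'n pt \<Rightarrow> real" where
  "dq i w = (fst (snd w)) $ i"

text \<open>Partial derivative with respect to the third (fibre) coordinate group:
  for a function on J^1Q this is d/dq^i_t, for a function on V^*Q it is d/dp_i.\<close>
definition partial3 :: "(('n::finite) pt \<Rightarrow> real) \<Rightarrow> 'n \<Rightarrow> 'n pt \<Rightarrow> real" where
  "partial3 f i x = frechet_derivative f (at x) (0, 0, axis i 1)"

definition momenta :: "(('n::finite) pt \<Rightarrow> real) \<Rightarrow> 'n pt \<Rightarrow> real ^ 'n" where
  "momenta \<L> y = (\<chi> i. partial3 \<L> i y)"

definition legendre_map :: "(('n::finite) pt \<Rightarrow> real) \<Rightarrow> 'n pt \<Rightarrow> 'n pt" where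
  "legendre_map \<L> y = (fst y, fst (snd y), momenta \<L> y)"

definition constraint_space :: "(('n::finite) pt \<Rightarrow> real) \<Rightarrow> 'n pt set" where
  "constraint_space \<L> = range (legendre_map \<L>)"

definition hamiltonian_map :: "(('n::finite) pt \<Rightarrow> real) \<Rightarrow> 'n pt \<Rightarrow> 'n pt" where
  "hamiltonian_map \<H> z = (fst z, fst (snd z), (\<chi> i. partial3 \<H> i z))"

definition pullback :: "(('n::finite) pt \<Rightarrow> 'n pt) \<Rightarrow> 'n form1 \<Rightarrow> 'n form1" where
  "pullback \<Phi> \<omega> z w = \<omega> (\<Phi> z) (frechet_derivative \<Phi> (at z) w)"

definition lagrangian_form :: "(('n::finite) pt \<Rightarrow> real) \<Rightarrow> 'n form1" where
  "lagrangian_form \<L> y w = \<L> y * dt w"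

definition poincare_cartan :: "(('n::finite) pt \<Rightarrow> real) \<Rightarrow> 'n form1" where
  "poincare_cartan \<L> y w =
     \<L> y * dt w + (\<Sum>i\<in>UNIV. momenta \<L> y $ i * (dq i w - (snd (snd y)) $ i * dt w))"

definition hamiltonian_form :: "(('n::finite) pt \<Rightarrow> real) \<Rightarrow> 'n form1" where
  "hamiltonian_form \<H> z w = (\<Sum>i\<in>UNIV. (snd (snd z)) $ i * dq i w) - \<H> z * dt w"

definition H_hat_form :: "(('n::finite) pt \<Rightarrow> real) \<Rightarrow> 'n form1" where
  "H_hat_form \<H> z w =
     (\<Sum>i\<in>UNIV. (snd (snd z)) $ i * dq i w) - (\<Sum>i\<in>UNIV. (snd (snd z)) $ i * partial3 \<H> i z) * dt w"

definition weakly_associated :: "(('n::finite) pt \<Rightarrow> real) \<Rightarrow> ('n pt \<Rightarrow> real) \<Rightarrow> bool" where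
  "weakly_associated \<H> \<L> \<longleftrightarrow>
     (legendre_map \<L> \<circ> hamiltonian_map \<H> \<circ> legendre_map \<L> = legendre_map \<L>) \<and>
     (\<forall>z\<in>constraint_space \<L>. \<forall>w.
        hamiltonian_form \<H> z w
          = H_hat_form \<H> z w + pullback (hamiltonian_map \<H>) (lagrangian_form \<L>) z w)"

end

theory Submission
  imports Defs
begin

lemma vec_diff:
  fixes f :: "'n::finite \<Rightarrow> 'a::real_normed_vector \<Rightarrow> real"
  assumes "\<And>i. f i differentiable (at z)"
  shows "(\<lambda>x. (\<chi> i. f i x)) differentiable (at z)"
proof -
  have "\<forall>b\<in>(Basis :: (real^'n) set). (\<lambda>x. (\<chi> i. f i x) \<bullet> b) differentiable at z"
  proof
    fix b :: "real^'n" assume "b \<in> Basis"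
    then obtain j where b: "b = axis j 1" unfolding Basis_vec_def by auto
    show "(\<lambda>x. (\<chi> i. f i x) \<bullet> b) differentiable at z"
      using assms[of j] by (simp add: b inner_axis)
  qed
  thus ?thesis using differentiable_componentwise_within by blast
qed

lemma Hmap_diff:
  fixes \<H> :: "'n::finite pt \<Rightarrow> real"
  assumes "\<And>i z. (\<lambda>z'. partial3 \<H> i z') differentiable (at z)"
  shows "hamiltonian_map \<H> differentiable (at z)"
proof -
  have a: "(\<lambda>x::'n pt. (\<chi> i. partial3 \<H> i x)) differentiable (at z)"
    by (rule vec_diff) (rule assms)
  have b: "(\<lambda>x::'n pt. fst x) differentiable (at z)"
    by (simp add: bounded_linear_imp_differentiable bounded_linear_fst)
  have c: "(\<lambda>x::'n pt. fst (snd x)) differentiable (at z)"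
    by (intro bounded_linear_imp_differentiable bounded_linear_compose[OF bounded_linear_fst bounded_linear_snd])
  have "(\<lambda>x::'n pt. (fst x, fst (snd x), (\<chi> i. partial3 \<H> i x))) differentiable (at z)"
    using a b c by (intro differentiable_Pair)
  thus ?thesis unfolding hamiltonian_map_def[abs_def] .
qed

lemma Hmap_deriv:
  fixes \<H> :: "'n::finite pt \<Rightarrow> real"
  assumes "\<And>i z. (\<lambda>z'. partial3 \<H> i z') differentiable (at z)"
  shows "fst (frechet_derivative (hamiltonian_map \<H>) (at z) w) = fst w"
    "fst (snd (frechet_derivative (hamiltonian_map \<H>) (at z) w)) = fst (snd w)"
proof -
  obtain D where D: "(hamiltonian_map \<H> has_derivative D) (at z)"
    using Hmap_diff[OF assms] unfolding differentiable_def by blast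
  have fD: "D = frechet_derivative (hamiltonian_map \<H>) (at z)"
    using frechet_derivative_at[OF D] .
  have e1: "(\<lambda>x. fst (hamiltonian_map \<H> x)) = fst"
    by (auto simp: hamiltonian_map_def)
  have e2: "(\<lambda>x. fst (snd (hamiltonian_map \<H> x))) = (\<lambda>x. fst (snd x))"
    by (auto simp: hamiltonian_map_def)
  have "((\<lambda>x. fst (hamiltonian_map \<H> x)) has_derivative (\<lambda>w. fst (D w))) (at z)"
    by (rule has_derivative_fst[OF D])
  hence d1: "(fst has_derivative (\<lambda>w. fst (D w))) (at z)" using e1 by simp
  have "(fst has_derivative fst) (at z)" by (rule has_derivative_fst[OF has_derivative_ident])
  hence "(\<lambda>w. fst (D w)) = fst" using d1 has_derivative_unique by blast
  thus "fst (frechet_derivative (hamiltonian_map \<H>) (at z) w) = fst w"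
    using fD by metis
  have "((\<lambda>x. fst (snd (hamiltonian_map \<H> x))) has_derivative (\<lambda>w. fst (snd (D w)))) (at z)"
    by (rule has_derivative_fst[OF has_derivative_snd[OF D]])
  hence d2: "((\<lambda>x. fst (snd x)) has_derivative (\<lambda>w. fst (snd (D w)))) (at z)" using e2 by simp
  have "((\<lambda>x::'n pt. fst (snd x)) has_derivative (\<lambda>w. fst (snd w))) (at z)"
    by (rule has_derivative_fst[OF has_derivative_snd[OF has_derivative_ident]])
  hence "(\<lambda>w. fst (snd (D w))) = (\<lambda>w. fst (snd w))" using d2 has_derivative_unique by blast
  thus "fst (snd (frechet_derivative (hamiltonian_map \<H>) (at z) w)) = fst (snd w)"
    using fD by metis
qed

theorem mainTheorem8:
  fixes \<L> \<H> :: "'n::finite pt \<Rightarrow> real"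
  assumes L_diff: "\<And>y. \<L> differentiable (at y)"
    and H_diff: "\<And>z. \<H> differentiable (at z)"
    and H_diff2: "\<And>i z. (\<lambda>z'. partial3 \<H> i z') differentiable (at z)"
    and assoc: "weakly_associated \<H> \<L>"
  shows "\<forall>z\<in>constraint_space \<L>. \<forall>w.
           hamiltonian_form \<H> z w = pullback (hamiltonian_map \<H>) (poincare_cartan \<L>) z w"
proof (intro ballI allI)
  fix z w assume z: "z \<in> constraint_space \<L>"
  then obtain y where y: "z = legendre_map \<L> y" unfolding constraint_space_def by auto
  have comp: "legendre_map \<L> \<circ> hamiltonian_map \<H> \<circ> legendre_map \<L> = legendre_map \<L>"
    and eq: "hamiltonian_form \<H> z w
          = H_hat_form \<H> z w + pullback (hamiltonian_map \<H>) (lagrangian_form \<L>) z w"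
    using assoc z unfolding weakly_associated_def by blast+
  have "legendre_map \<L> (hamiltonian_map \<H> z) = z"
    using fun_cong[OF comp, of y] y by simp
  hence mom: "momenta \<L> (hamiltonian_map \<H> z) = snd (snd z)"
    by (metis legendre_map_def snd_conv)
  define v where "v = frechet_derivative (hamiltonian_map \<H>) (at z) w"
  have v1: "dt v = dt w" and v2: "\<And>i. dq i v = dq i w"
    using Hmap_deriv[OF H_diff2, of z w] by (auto simp: v_def dt_def dq_def)
  have h3: "snd (snd (hamiltonian_map \<H> z)) = (\<chi> i. partial3 \<H> i z)"
    by (simp add: hamiltonian_map_def)
  have "pullback (hamiltonian_map \<H>) (poincare_cartan \<L>) z w
     = \<L> (hamiltonian_map \<H> z) * dt w
       + (\<Sum>i\<in>UNIV. snd (snd z) $ i * (dq i w - partial3 \<H> i z * dt w))"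
    unfolding pullback_def poincare_cartan_def v_def[symmetric] mom h3 v1 v2 by simp
  also have "\<dots> = H_hat_form \<H> z w + pullback (hamiltonian_map \<H>) (lagrangian_form \<L>) z w"
    unfolding H_hat_form_def pullback_def lagrangian_form_def v_def[symmetric] v1
    by (simp add: right_diff_distrib sum_subtractf sum_distrib_right mult.assoc)
  finally show "hamiltonian_form \<H> z w = pullback (hamiltonian_map \<H>) (poincare_cartan \<L>) z w"
    using eq by simp
qed

end
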